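(* If a formula $\varphi$ is satisfiable in a Bochvar-Kripke model, then it is satisfiable in a Bochvar-Kripke model $(W,R,v)$ with $W$ finite.
   Context: Formulas are built from a countably infinite set of propositional variables and the constants $0,1$ using the unary connectives $\neg$, $J_2$, $\Box$ and the binary connective $\vee$. Let $\mathbf{WK}^e$ be the algebra on $\{0,\tfrac12,1\}$ with $\neg0=1$, $\neg1=0$, $\neg\tfrac12=\tfrac12$; $a\vee b=\tfrac12$ if $a=\tfrac12$ or $b=\tfrac12$, otherwise $a\vee b=\max(a,b)$; $J_2(1)=1$, $J_2(\tfrac12)=J_2(0)=0$. A Bochvar-Kripke model is a triple $(W,R,v)$ with $W\neq\emptyset$, $R\subseteq W\times W$, $v:W\times\mathrm{Fm}\to\{0,\tfrac12,1\}$ such that for each $w$, $v(w,\cdot)$ commutes with $\neg,\vee,J_2,0,1$ as computed in $\mathbf{WK}^e$, and: $v(w,\Box\varphi)=\tfrac12$ iff $v(w,\varphi)=\tfrac12$; $v(w,\Box\varphi)=1$ iff $v(w,\varphi)\neq\tfrac12$ and $v(s,\varphi)=1$ for all $s$ with $wRs$; $v(w,\Box\varphi)=0$ iff $v(w,\varphi)\neq\tfrac12$ and $v(s,\varphi)\neq1$ for some $s$ with $wRs$. A formula $\varphi$ is satisfiable in a model $(W,R,v)$ if $v(w,\varphi)=1$ for some $w\in W$. *)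

theory Defs
  imports Main
begin

datatype tv = Zero | Half | One

datatype fm = Var nat | Bot | Top | Neg fm | Disj fm fm | J2 fm | Box fm

fun wk_neg :: "tv \<Rightarrow> tv" where
  "wk_neg Zero = One" | "wk_neg One = Zero" | "wk_neg Half = Half"

definition wk_disj :: "tv \<Rightarrow> tv \<Rightarrow> tv" where
  "wk_disj a b = (if a = Half \<or> b = Half then Half
                  else if a = One \<or> b = One then One else Zero)"

fun wk_J2 :: "tv \<Rightarrow> tv" where
  "wk_J2 One = One" | "wk_J2 Half = Zero" | "wk_J2 Zero = Zero"

definition bk_model :: "'w set \<Rightarrow> ('w \<times> 'w) set \<Rightarrow> ('w \<Rightarrow> fm \<Rightarrow> tv) \<Rightarrow> bool" where
  "bk_model W R v \<longleftrightarrow> W \<noteq> {} \<and> R \<subseteq> W \<times> W \<and>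
    (\<forall>w\<in>W.
      v w Bot = Zero \<and> v w Top = One \<and>
      (\<forall>\<phi>. v w (Neg \<phi>) = wk_neg (v w \<phi>)) \<and>
      (\<forall>\<phi> \<psi>. v w (Disj \<phi> \<psi>) = wk_disj (v w \<phi>) (v w \<psi>)) \<and>
      (\<forall>\<phi>. v w (J2 \<phi>) = wk_J2 (v w \<phi>)) \<and>
      (\<forall>\<phi>. (v w (Box \<phi>) = Half \<longleftrightarrow> v w \<phi> = Half) \<and>
            (v w (Box \<phi>) = One \<longleftrightarrow> v w \<phi> \<noteq> Half \<and> (\<forall>s. (w, s) \<in> R \<longrightarrow> v s \<phi> = One)) \<and>
            (v w (Box \<phi>) = Zero \<longleftrightarrow> v w \<phi> \<noteq> Half \<and> (\<exists>s. (w, s) \<in> R \<and> v s \<phi> \<noteq> One))))"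

definition satisfiable_in :: "fm \<Rightarrow> 'w set \<Rightarrow> ('w \<times> 'w) set \<Rightarrow> ('w \<Rightarrow> fm \<Rightarrow> tv) \<Rightarrow> bool" where
  "satisfiable_in \<phi> W R v \<longleftrightarrow> (\<exists>w\<in>W. v w \<phi> = One)"

end

theory Submission
  imports Defs "HOL-Library.FuncSet"
begin

fun ev :: "(nat \<times> nat) set \<Rightarrow> (nat \<Rightarrow> nat \<Rightarrow> tv) \<Rightarrow> nat \<Rightarrow> fm \<Rightarrow> tv" where
  "ev R V n (Var k) = V n k"
| "ev R V n Bot = Zero"
| "ev R V n Top = One"
| "ev R V n (Neg a) = wk_neg (ev R V n a)"
| "ev R V n (Disj a b) = wk_disj (ev R V n a) (ev R V n b)"
| "ev R V n (J2 a) = wk_J2 (ev R V n a)"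
| "ev R V n (Box a) = (if ev R V n a = Half then Half
     else if (\<forall>m. (n, m) \<in> R \<longrightarrow> ev R V m a = One) then One else Zero)"

lemma ev_model: "W \<noteq> {} \<Longrightarrow> R \<subseteq> W \<times> W \<Longrightarrow> bk_model W R (ev R V)"
  unfolding bk_model_def by auto

fun sub :: "fm \<Rightarrow> fm set" where
  "sub (Var k) = {Var k}"
| "sub Bot = {Bot}"
| "sub Top = {Top}"
| "sub (Neg a) = insert (Neg a) (sub a)"
| "sub (Disj a b) = insert (Disj a b) (sub a \<union> sub b)"
| "sub (J2 a) = insert (J2 a) (sub a)"
| "sub (Box a) = insert (Box a) (sub a)"

lemma finite_sub: "finite (sub f)"
  by (induction f) auto

lemma sub_self: "f \<in> sub f"
  by (cases f) auto

lemma sub_trans: "a \<in> sub b \<Longrightarrow> b \<in> sub c \<Longrightarrow> a \<in> sub c"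
  by (induction c) auto

lemma sub_Neg: "Neg a \<in> sub c \<Longrightarrow> a \<in> sub c"
  using sub_trans[of a "Neg a" c] sub_self[of a] by auto
lemma sub_J2: "J2 a \<in> sub c \<Longrightarrow> a \<in> sub c"
  using sub_trans[of a "J2 a" c] sub_self[of a] by auto
lemma sub_Box: "Box a \<in> sub c \<Longrightarrow> a \<in> sub c"
  using sub_trans[of a "Box a" c] sub_self[of a] by auto
lemma sub_Disj: "Disj a b \<in> sub c \<Longrightarrow> a \<in> sub c \<and> b \<in> sub c"
  using sub_trans[of a "Disj a b" c] sub_trans[of b "Disj a b" c] sub_self[of a] sub_self[of b] by auto

lemma UNIV_tv: "(UNIV :: tv set) = {Zero, Half, One}"
  using tv.exhaust by auto

theorem mainTheorem6:
  fixes \<phi> :: fm and W :: "'w set" and R :: "('w \<times> 'w) set" and v :: "'w \<Rightarrow> fm \<Rightarrow> tv"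
  assumes "bk_model W R v" and "satisfiable_in \<phi> W R v"
  shows "\<exists>(W' :: nat set) R' v'. finite W' \<and> bk_model W' R' v' \<and> satisfiable_in \<phi> W' R' v'"
proof -
  have M: "W \<noteq> {}" "R \<subseteq> W \<times> W" using assms(1) unfolding bk_model_def by auto
  define S where "S = sub \<phi>"
  define tpf where "tpf w = restrict (v w) S" for w
  define T where "T = tpf ` W"
  have "T \<subseteq> (\<Pi>\<^sub>E i \<in> S. UNIV)" unfolding T_def tpf_def by auto
  moreover have "finite (\<Pi>\<^sub>E i \<in> S. (UNIV :: tv set))"
    by (rule finite_PiE) (auto simp: S_def finite_sub UNIV_tv)
  ultimately have fT: "finite T" by (rule finite_subset)
  define N where "N = card T"
  obtain h where h: "bij_betw h {0..<N} T" using ex_bij_betw_nat_finite[OF fT] N_def by blast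
  define R' where "R' = {(m, n). m < N \<and> n < N \<and> (\<exists>w u. (w, u) \<in> R \<and> tpf w = h m \<and> tpf u = h n)}"
  define V where "V n k = h n (Var k)" for n k
  have typeq: "v w a = v u a" if "tpf w = tpf u" "a \<in> S" for w u a
    using that unfolding tpf_def by (metis restrict_apply')
  have typv: "tpf w a = v w a" if "a \<in> S" for w a
    using that unfolding tpf_def by simp
  have hsurj: "\<exists>m<N. h m = tpf s" if "s \<in> W" for s
  proof -
    have "tpf s \<in> T" using that T_def by auto
    then show ?thesis using h unfolding bij_betw_def by force
  qed
  have vm: "v w Bot = Zero \<and> v w Top = One \<and>
      (\<forall>\<phi>. v w (Neg \<phi>) = wk_neg (v w \<phi>)) \<and>
      (\<forall>\<phi> \<psi>. v w (Disj \<phi> \<psi>) = wk_disj (v w \<phi>) (v w \<psi>)) \<and>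
      (\<forall>\<phi>. v w (J2 \<phi>) = wk_J2 (v w \<phi>))" if "w \<in> W" for w
    using assms(1) that unfolding bk_model_def by blast
  have key: "\<forall>n w. n < N \<longrightarrow> w \<in> W \<longrightarrow> h n = tpf w \<longrightarrow> ev R' V n \<psi> = v w \<psi>"
    if "\<psi> \<in> S" for \<psi>
    using that
  proof (induction \<psi>)
    case (Var k)
    then show ?case by (auto simp: V_def typv)
  next
    case Bot
    then show ?case using vm by simp
  next
    case Top
    then show ?case using vm by simp
  next
    case (Neg a)
    then have "a \<in> S" using sub_Neg S_def by auto
    then show ?case using Neg.IH vm by simp
  next
    case (J2 a)
    then have "a \<in> S" using sub_J2 S_def by auto
    then show ?case using J2.IH vm by simp
  next
    case (Disj a b)
    have aS: "a \<in> S" and bS: "b \<in> S" using Disj.prems sub_Disj unfolding S_def by blast+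
    show ?case
    proof (intro allI impI)
      fix n w assume n: "n < N" and w: "w \<in> W" and hn: "h n = tpf w"
      have "ev R' V n a = v w a" "ev R' V n b = v w b" using Disj.IH(1)[OF aS, rule_format, OF n w hn] Disj.IH(2)[OF bS, rule_format, OF n w hn] by auto
      moreover have "v w (Disj a b) = wk_disj (v w a) (v w b)" using vm[OF w] by blast
      ultimately show "ev R' V n (Disj a b) = v w (Disj a b)" by simp
    qed
  next
    case (Box a)
    have aS: "a \<in> S" using Box.prems sub_Box S_def by auto
    note IH = Box.IH[OF aS]
    show ?case
    proof (intro allI impI)
      fix n w assume n: "n < N" and w: "w \<in> W" and hn: "h n = tpf w"
      have e: "ev R' V n a = v w a" using IH n w hn by auto
      have vb: "(v w (Box a) = Half \<longleftrightarrow> v w a = Half) \<and>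
            (v w (Box a) = One \<longleftrightarrow> v w a \<noteq> Half \<and> (\<forall>s. (w, s) \<in> R \<longrightarrow> v s a = One)) \<and>
            (v w (Box a) = Zero \<longleftrightarrow> v w a \<noteq> Half \<and> (\<exists>s. (w, s) \<in> R \<and> v s a \<noteq> One))"
        using assms(1) w unfolding bk_model_def by blast
      show "ev R' V n (Box a) = v w (Box a)"
      proof (cases "v w a = Half")
        case True then show ?thesis using e vb by simp
      next
        case nh: False
        show ?thesis
        proof (cases "v w (Box a)")
          case One
          have "ev R' V m a = One" if mR: "(n, m) \<in> R'" for m
          proof -
            obtain w' u where wu: "(w', u) \<in> R" "tpf w' = h n" "tpf u = h m" "m < N"
              using mR unfolding R'_def by blast
            have "w' \<in> W" "u \<in> W" using wu M by auto
            have "v w' (Box a) = v w (Box a)" using typeq[of w' w "Box a"] wu hn Box.prems by auto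
            then have "v w' (Box a) = One" using One by simp
            then have "v u a = One" using assms(1) \<open>w' \<in> W\<close> wu(1) unfolding bk_model_def by blast
            then show ?thesis using IH wu \<open>u \<in> W\<close> by auto
          qed
          then show ?thesis using One nh e by auto
        next
          case Zero
          then obtain s where s: "(w, s) \<in> R" "v s a \<noteq> One" using vb by auto
          have sW: "s \<in> W" using s M by auto
          obtain m where m: "m < N" "h m = tpf s" using hsurj[OF sW] by auto
          have "(n, m) \<in> R'" unfolding R'_def using n m s hn by auto
          moreover have "ev R' V m a \<noteq> One" using IH m sW s by auto
          ultimately show ?thesis using Zero nh e by auto
        next
          case Half then show ?thesis using vb nh by simp
        qed
      qed
    qed
  qed
  obtain w where w: "w \<in> W" "v w \<phi> = One" using assms(2) unfolding satisfiable_in_def by auto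
  obtain n where n: "n < N" "h n = tpf w" using hsurj[OF w(1)] by auto
  have "ev R' V n \<phi> = One" using key[of \<phi>] sub_self[of \<phi>] S_def n w by auto
  moreover have "bk_model {0..<N} R' (ev R' V)"
    by (rule ev_model) (use n R'_def in auto)
  ultimately show ?thesis using n unfolding satisfiable_in_def
    by (intro exI[of _ "{0..<N}"] exI[of _ R'] exI[of _ "ev R' V"]) auto
qed

end
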